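(* Let $q$ be a prime power, $\mathbb{L}=\mathrm{GF}(q^m)$, and $\ell\mid m$. Let $$\mathcal{C}_\ell=\{(b,b^q,\ldots,b^{q^{\ell-1}}) : b\in\mathrm{GF}(q^\ell)\}\subseteq\mathbb{L}^\ell.$$ In the symbol Hamming metric on $\mathbb{L}^\ell$, the covering radius of $\mathcal{C}_\ell$ is $\ell$ if $\ell<m$ and $\ell-1$ if $\ell=m$.
   Context: The symbol Hamming distance between $x,y\in\mathbb{L}^\ell$ is $|\{i : x_i\ne y_i\}|$. The covering radius of a code $\mathcal{C}\subseteq\mathbb{L}^\ell$ is $\max_{x\in\mathbb{L}^\ell}\min_{c\in\mathcal{C}}d(x,c)$. $\mathrm{GF}(q^\ell)$ is the unique subfield of $\mathbb{L}$ of size $q^\ell$. *)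

theory Defs
  imports "HOL-Computational_Algebra.Primes"
begin

text \<open>Vectors in L^n are represented as lists of length n.\<close>

definition hamming_dist :: "'a list \<Rightarrow> 'a list \<Rightarrow> nat" where
  "hamming_dist x y = card {i. i < length x \<and> x ! i \<noteq> y ! i}"

definition covering_radius :: "nat \<Rightarrow> ('a::finite) list set \<Rightarrow> nat" where
  "covering_radius n C =
     Max ((\<lambda>x. Min ((\<lambda>c. hamming_dist x c) ` C)) ` {x. length x = n})"

definition is_subfield :: "('a::field) set \<Rightarrow> bool" where
  "is_subfield S \<longleftrightarrow> 0 \<in> S \<and> 1 \<in> S \<and>
     (\<forall>x\<in>S. \<forall>y\<in>S. x + y \<in> S \<and> x - y \<in> S \<and> x * y \<in> S) \<and>
     (\<forall>x\<in>S. inverse x \<in> S)"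

definition GF_sub :: "nat \<Rightarrow> ('a::{field,finite}) set" where
  "GF_sub Q = (THE S. is_subfield S \<and> card S = Q)"

definition prime_power :: "nat \<Rightarrow> bool" where
  "prime_power q \<longleftrightarrow> (\<exists>p k. prime (p::nat) \<and> k > 0 \<and> q = p ^ k)"

definition trace_code :: "nat \<Rightarrow> nat \<Rightarrow> ('a::{field,finite}) list set" where
  "trace_code q l = {map (\<lambda>i. b ^ (q ^ i)) [0..<l] | b. b \<in> GF_sub (q ^ l)}"

end

theory Submission
  imports Defs "HOL-Computational_Algebra.Polynomial"
begin

lemma subfield_pow:
  fixes S :: "'a::{field,finite} set"
  assumes sf: "is_subfield S" and x: "x \<in> S"
  shows "x ^ card S = x"
proof (cases "x = 0")
  case True
  have "card S > 0" using sf by (auto simp: is_subfield_def card_gt_0_iff)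
  then show ?thesis using True by simp
next
  case False
  have cS: "card S > 0" using sf by (auto simp: is_subfield_def card_gt_0_iff)
  have fin: "finite (S - {0})" by simp
  have cd: "card (S - {0}) = card S - 1" using sf by (auto simp: is_subfield_def)
  have "(\<Prod>y\<in>S-{0}. x * y) = (\<Prod>y\<in>S-{0}. y)"
  proof (rule prod.reindex_bij_witness[of _ "\<lambda>y. y / x" "\<lambda>y. x * y"])
    fix a assume "a \<in> S - {0}"
    then show "a / x \<in> S - {0}" using sf x False
      by (auto simp: is_subfield_def divide_inverse)
  qed (use False sf x in \<open>auto simp: is_subfield_def\<close>)
  moreover have "(\<Prod>y\<in>S-{0}. x * y) = x ^ (card S - 1) * (\<Prod>y\<in>S-{0}. y)"
    by (simp add: prod.distrib cd)
  moreover have "(\<Prod>y\<in>S-{0}. y) \<noteq> 0" by simp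
  ultimately have "x ^ (card S - 1) = 1" by simp
  then have "x * x ^ (card S - 1) = x" by simp
  then show ?thesis using cS by (metis Suc_diff_1 power_Suc)
qed

lemma univ_subfield: "is_subfield (UNIV :: 'a::field set)"
  by (simp add: is_subfield_def)

lemma pow_card_self:
  fixes x :: "'a::{field,finite}"
  shows "x ^ card (UNIV :: 'a set) = x"
  using subfield_pow[OF univ_subfield] by simp

lemma of_nat_card_zero: "of_nat (card (UNIV :: 'a::{field,finite} set)) = (0::'a)"
proof -
  have "(\<Sum>y\<in>UNIV. 1 + y) = (\<Sum>y\<in>(UNIV::'a set). y)"
    by (rule sum.reindex_bij_witness[of _ "\<lambda>y. y - 1" "\<lambda>y. 1 + y"]) auto
  then show ?thesis by (simp add: sum.distrib)
qed


lemma char_eq: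
  assumes p: "prime (p::nat)" and c: "card (UNIV :: 'a::{field,finite} set) = p ^ e"
  shows "CHAR('a) = p"
proof -
  have cp: "prime CHAR('a)"
    using prime_CHAR_semidom[where ?'a='a] finite_imp_CHAR_pos[where ?'a='a] by simp
  have "CHAR('a) dvd p ^ e" using of_nat_card_zero[where ?'a='a] c of_nat_eq_0_iff_char_dvd by metis
  then have "CHAR('a) dvd p" using cp prime_dvd_power by blast
  then show ?thesis using cp p primes_dvd_imp_eq by blast
qed

lemma card_roots:
  fixes Q :: nat
  assumes Q2: "Q \<ge> 2" and dv: "(Q - 1) dvd (card (UNIV :: 'a::{field,finite} set) - 1)"
  shows "card {x::'a. x ^ Q = x} = Q"
proof -
  define N where "N = card (UNIV :: 'a set)"
  define d where "d = Q - 1"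
  obtain k where k: "N - 1 = d * k" using dv unfolding N_def d_def by blast
  have "card {0::'a, 1} \<le> card (UNIV :: 'a set)" by (rule card_mono) auto
  then have N2: "N \<ge> 2" unfolding N_def by simp
  have d1: "d \<ge> 1" using Q2 unfolding d_def by simp
  have k1: "k \<ge> 1" using k N2 d1 by (cases k) auto
  define f :: "'a poly" where "f = monom 1 Q - monom 1 1"
  define h :: "'a poly" where "h = (\<Sum>j<k. monom 1 (d * j))"
  have degf: "degree f = Q" unfolding f_def using Q2
    by (subst diff_conv_add_uminus, subst degree_add_eq_left) (auto simp: degree_monom_eq)
  have f0: "f \<noteq> 0" using degf Q2 by auto
  have rf: "{x. poly f x = 0} = {x::'a. x ^ Q = x}" unfolding f_def by (auto simp: poly_monom)
  have ph: "poly h x = (\<Sum>j<k. (x ^ d) ^ j)" for x unfolding h_def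
    by (simp add: poly_sum poly_monom power_mult)
  have z: "(0::'a) ^ d = 0" using d1 by simp
  have "poly h 0 = (\<Sum>j<k. if j = 0 then 1 else (0::'a))" unfolding ph z
    by (rule sum.cong) (auto simp: power_0_left)
  also have "\<dots> = 1" using k1 by simp
  finally have "poly h 0 = 1" .
  then have h0: "h \<noteq> 0" by auto
  have degh: "degree h \<le> d * (k - 1)" unfolding h_def
  proof (rule degree_sum_le)
    fix j assume "j \<in> {..<k}"
    then have "d * j \<le> d * (k - 1)" by (intro mult_le_mono2) auto
    then show "degree (monom (1::'a) (d * j)) \<le> d * (k - 1)" by (simp add: degree_monom_eq)
  qed simp
  have "d * (k - 1) = N - Q" using k d1 N2 Q2 unfolding d_def by (simp add: algebra_simps diff_mult_distrib2)
  have cov: "UNIV \<subseteq> {x::'a. x ^ Q = x} \<union> {x. poly h x = 0}"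
  proof
    fix x :: 'a
    show "x \<in> {x::'a. x ^ Q = x} \<union> {x. poly h x = 0}"
    proof (cases "x ^ Q = x")
      case False
      then have x0: "x \<noteq> 0" using Q2 by auto
      have "x ^ d \<noteq> 1"
      proof
        assume "x ^ d = 1"
        then have "x ^ Q = x" unfolding d_def using Q2 by (metis Suc_diff_1 less_le_trans mult.right_neutral pos2 power_Suc)
        then show False using False by simp
      qed
      have "x * x ^ (N - 1) = x * 1" using pow_card_self[of x] N2 unfolding N_def
        by (metis Suc_diff_1 less_le_trans mult.right_neutral pos2 power_Suc)
      then have "x ^ (N - 1) = 1" using x0 by simp
      then have "(x ^ d) ^ k - 1 = 0" by (simp add: k[symmetric] power_mult[symmetric])
      then have "(x ^ d - 1) * (\<Sum>j<k. (x ^ d) ^ j) = 0" by (simp add: power_diff_1_eq)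
      then have "poly h x = 0" using \<open>x ^ d \<noteq> 1\<close> ph by simp
      then show ?thesis by simp
    qed simp
  qed
  have c1: "N \<le> card ({x::'a. x ^ Q = x} \<union> {x. poly h x = 0})"
    unfolding N_def by (rule card_mono) (use cov in auto)
  have c2: "card ({x::'a. x ^ Q = x} \<union> {x. poly h x = 0}) \<le> card {x::'a. x ^ Q = x} + card {x. poly h x = 0}" by (rule card_Un_le)
  have c3: "card {x. poly h x = 0} \<le> N - Q" using card_poly_roots_bound[OF h0] degh \<open>d * (k - 1) = N - Q\<close> by simp
  have "d \<le> d * k" using k1 by simp
  then have c4: "Q \<le> N" using k d1 N2 unfolding d_def by linarith
  have ge: "card {x::'a. x ^ Q = x} \<ge> Q" using c1 c2 c3 c4 by linarith
  moreover have "card {x::'a. x ^ Q = x} \<le> Q" using card_poly_roots_bound[OF f0] degf rf by simp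
  ultimately show ?thesis by simp
qed


lemma card_roots_le:
  assumes Q2: "Q \<ge> 2"
  shows "card {x::'a::field. x ^ Q = x} \<le> Q"
proof -
  define f :: "'a poly" where "f = monom 1 Q - monom 1 1"
  have degf: "degree f = Q" unfolding f_def using Q2
    by (subst diff_conv_add_uminus, subst degree_add_eq_left) (auto simp: degree_monom_eq)
  have f0: "f \<noteq> 0" using degf Q2 by auto
  have rf: "{x. poly f x = 0} = {x::'a. x ^ Q = x}" unfolding f_def by (auto simp: poly_monom)
  show ?thesis using card_poly_roots_bound[OF f0] degf rf by simp
qed

lemma roots_subfield:
  assumes Q: "Q > 0" and frob: "\<And>x y::'a::field. (x + y) ^ Q = x ^ Q + y ^ Q"
  shows "is_subfield {x::'a. x ^ Q = x}"
  unfolding is_subfield_def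
proof (intro conjI ballI)
  fix x y :: 'a assume x: "x \<in> {x. x ^ Q = x}" and y: "y \<in> {x. x ^ Q = x}"
  show "x + y \<in> {x. x ^ Q = x}" using x y frob by simp
  have "(x - y) ^ Q + y ^ Q = x ^ Q" using frob[of "x - y" y] by simp
  then show "x - y \<in> {x. x ^ Q = x}" using x y by (simp add: algebra_simps)
  show "x * y \<in> {x. x ^ Q = x}" using x y by (simp add: power_mult_distrib)
next
  fix x :: 'a assume x: "x \<in> {x. x ^ Q = x}"
  then show "inverse x \<in> {x. x ^ Q = x}" by (simp add: power_inverse)
qed (use Q in auto)

lemma GF_sub_eq:
  assumes Q2: "Q \<ge> 2" and dv: "(Q - 1) dvd (card (UNIV :: 'a::{field,finite} set) - 1)"
    and frob: "\<And>x y::'a. (x + y) ^ Q = x ^ Q + y ^ Q"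
  shows "(GF_sub Q :: 'a set) = {x::'a. x ^ Q = x}"
  unfolding GF_sub_def
proof (rule the_equality)
  show "is_subfield {x::'a. x ^ Q = x} \<and> card {x::'a. x ^ Q = x} = Q"
    using roots_subfield[of Q] frob Q2 card_roots[OF Q2 dv] by auto
next
  fix S :: "'a set" assume S: "is_subfield S \<and> card S = Q"
  have sub: "S \<subseteq> {x::'a. x ^ Q = x}" using subfield_pow[of S] S by auto
  show "S = {x::'a. x ^ Q = x}"
    by (rule card_subset_eq) (use sub S card_roots[OF Q2 dv] in auto)
qed

lemma geom_lt:
  assumes "(q::nat) \<ge> 2"
  shows "(\<Sum>k<m. q ^ k) < q ^ m"
proof (induction m)
  case (Suc m)
  have "2 * q ^ m \<le> q * q ^ m" using assms by (intro mult_le_mono1) auto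
  then have "q ^ m + q ^ m \<le> q ^ Suc m" by (simp only: power_Suc mult_2)
  then show ?case using Suc by simp
qed simp

lemma card_split:
  "card {i. i < (n::nat) \<and> P i} + card {i. i < n \<and> \<not> P i} = n"
proof -
  have "card ({i. i < n \<and> P i} \<union> {i. i < n \<and> \<not> P i}) = card {i. i < n \<and> P i} + card {i. i < n \<and> \<not> P i}"
    by (rule card_Un_disjoint) auto
  moreover have "{i. i < n \<and> P i} \<union> {i. i < n \<and> \<not> P i} = {..<n}" by auto
  ultimately show ?thesis by simp
qed

lemma hd_le: "hamming_dist x c \<le> length x"
  unfolding hamming_dist_def
  by (rule order_trans[OF card_mono[of "{..<length x}"]]) auto

lemma nat_pow_dvd:
  assumes "l dvd m" and "(q::nat) \<ge> 1"
  shows "(q ^ l - 1) dvd (q ^ m - 1)"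
proof -
  obtain j where j: "m = l * j" using assms by blast
  have "int (q ^ l) ^ j - 1 = (int (q ^ l) - 1) * (\<Sum>i<j. int (q ^ l) ^ i)" by (rule power_diff_1_eq)
  then have "(int (q ^ l) - 1) dvd (int (q ^ l) ^ j - 1)" by simp
  moreover have "int (q ^ l) - 1 = int (q ^ l - 1)" using assms by simp
  moreover have "int (q ^ l) ^ j - 1 = int (q ^ m - 1)" using assms
    by (simp add: j power_mult of_nat_diff)
  ultimately show ?thesis by (metis of_nat_dvd_iff)
qed


theorem theorem10p2:
  fixes q m l :: nat
  assumes "prime_power q"
    and "m > 0"
    and "card (UNIV :: ('a::{field,finite}) set) = q ^ m"
    and "l dvd m"
  shows "covering_radius l (trace_code q l :: 'a list set) = (if l < m then l else l - 1)"
proof -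
  obtain p e where p: "prime p" and e: "e > 0" and qpe: "q = p ^ e"
    using assms(1) unfolding prime_power_def by blast
  have cardU: "card (UNIV :: 'a set) = p ^ (e * m)" using assms(3) qpe by (simp add: power_mult)
  have ch: "CHAR('a) = p" by (rule char_eq[OF p cardU])
  have "p ^ 1 \<le> p ^ e" by (rule power_increasing) (use e prime_ge_1_nat[OF p] in auto)
  then have q2: "q \<ge> 2" using qpe prime_ge_2_nat[OF p] by simp
  have frob: "\<And>x y::'a. (x + y) ^ (q ^ i) = x ^ (q ^ i) + y ^ (q ^ i)" for i
    by (rule freshmans_dream'[where n="e * i"]) (use ch p qpe in \<open>auto simp: power_mult\<close>)
  have l1: "l \<ge> 1" using assms(2,4) by (cases l) auto
  have lm: "l \<le> m" using assms(2,4) by (simp add: dvd_imp_le)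
  have "q ^ 1 \<le> q ^ l" by (rule power_increasing) (use l1 q2 in auto)
  then have Q2: "q ^ l \<ge> 2" using q2 by simp
  have dv: "(q ^ l - 1) dvd (card (UNIV :: 'a set) - 1)"
    using nat_pow_dvd[OF assms(4)] q2 assms(3) by simp
  define R where "R = {x::'a. x ^ (q ^ l) = x}"
  have GF: "(GF_sub (q ^ l) :: 'a set) = R" unfolding R_def by (rule GF_sub_eq[OF Q2 dv frob])
  have cardR: "card R = q ^ l" unfolding R_def by (rule card_roots[OF Q2 dv])
  define C where "C = (trace_code q l :: 'a list set)"
  have C: "C = {map (\<lambda>i. b ^ (q ^ i)) [0..<l] | b. b \<in> R}"
    unfolding C_def trace_code_def GF ..
  have Rpow: "b ^ (q ^ i) \<in> R" if "b \<in> R" for b i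
  proof -
    have "(b ^ (q ^ i)) ^ (q ^ l) = b ^ (q ^ i * q ^ l)" by (rule power_mult[symmetric])
    also have "\<dots> = b ^ (q ^ l * q ^ i)" by (simp only: mult.commute)
    also have "\<dots> = (b ^ (q ^ l)) ^ (q ^ i)" by (rule power_mult)
    finally have "(b ^ (q ^ i)) ^ (q ^ l) = (b ^ (q ^ l)) ^ (q ^ i)" .
    then show ?thesis using that unfolding R_def by simp
  qed
  have finL: "finite {x :: 'a list. length x = l}"
    using finite_lists_length_eq[of "UNIV :: 'a set" l] by simp
  have Csub: "C \<subseteq> {x. length x = l}" unfolding C by auto
  have finC: "finite C" using finL Csub finite_subset by blast
  have "(0::'a) \<in> R" unfolding R_def using l1 q2 by simp
  then have Cne: "C \<noteq> {}" unfolding C by blast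
  define D where "D x = Min ((\<lambda>c. hamming_dist x c) ` C)" for x :: "'a list"
  have cr: "covering_radius l C = Max (D ` {x. length x = l})"
    unfolding covering_radius_def D_def ..
  have Dle: "D x \<le> hamming_dist x c" if "c \<in> C" for x c
    unfolding D_def using finC that by simp
  have Dge: "D x \<ge> t" if "\<And>c. c \<in> C \<Longrightarrow> hamming_dist x c \<ge> t" for x t
    unfolding D_def using finC Cne that by (subst Min_ge_iff) auto
  have Dl: "D x \<le> l" if "length x = l" for x
  proof -
    obtain c where "c \<in> C" using Cne by blast
    then show ?thesis using Dle[of c x] hd_le[of x c] that by simp
  qed
  have finD: "finite (D ` {x. length x = l})" using finL by simp
  have "replicate l (0::'a) \<in> {x. length x = l}" by simp
  then have neD: "D ` {x. length x = l} \<noteq> {}" by blast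
  have hd_map: "hamming_dist x (map (\<lambda>i. b ^ (q ^ i)) [0..<l]) = card {i. i < l \<and> x ! i \<noteq> b ^ (q ^ i)}"
    if "length x = l" for x and b :: 'a
    unfolding hamming_dist_def using that by (intro arg_cong[where f=card]) auto
  show ?thesis
  proof (cases "l < m")
    case True
    have "card R < card (UNIV :: 'a set)" using cardR assms(3) True q2
      by (simp add: power_strict_increasing)
    then have "R \<noteq> UNIV" by auto
    then obtain a :: 'a where a: "a \<notin> R" by blast
    define x0 where "x0 = replicate l a"
    have "hamming_dist x0 c \<ge> l" if "c \<in> C" for c
    proof -
      obtain b where b: "b \<in> R" "c = map (\<lambda>i. b ^ (q ^ i)) [0..<l]" using \<open>c \<in> C\<close> unfolding C by blast
      have "{i. i < l \<and> x0 ! i \<noteq> b ^ (q ^ i)} = {..<l}"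
        using Rpow[OF b(1)] a unfolding x0_def by auto
      then show ?thesis unfolding b(2) by (subst hd_map) (auto simp: x0_def)
    qed
    then have "D x0 \<ge> l" by (rule Dge)
    moreover have "x0 \<in> {x. length x = l}" unfolding x0_def by simp
    ultimately have "Max (D ` {x. length x = l}) \<ge> l"
      using finD by (meson Max_ge image_eqI le_trans)
    moreover have "Max (D ` {x. length x = l}) \<le> l" using finD neD Dl by auto
    ultimately show ?thesis unfolding cr[unfolded C_def] using True by simp
  next
    case False
    then have lm': "l = m" using lm by simp
    have "x ^ (q ^ l) = x" for x :: 'a using pow_card_self[of x] unfolding assms(3) lm' .
    then have RU: "R = UNIV" unfolding R_def by auto
    have up: "D x \<le> m - 1" if "length x = m" for x
    proof -
      define c where "c = map (\<lambda>i. (x ! 0) ^ (q ^ i)) [0..<l]"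
      have "c \<in> C" unfolding C c_def RU by blast
      have "card {i. i < l \<and> x ! i \<noteq> (x ! 0) ^ (q ^ i)} \<le> card {1..<m}"
        by (rule card_mono) (auto simp: lm' Suc_le_eq not_less elim: less_SucE intro: ccontr)
      then have "hamming_dist x c \<le> m - 1" unfolding c_def using that lm' by (subst hd_map) auto
      then show ?thesis using Dle[OF \<open>c \<in> C\<close>, of x] by simp
    qed
    define B where "B = (\<Union>k\<in>{1..<m}. {x::'a. x ^ (q ^ k) = x})"
    have "card B \<le> (\<Sum>k\<in>{1..<m}. card {x::'a. x ^ (q ^ k) = x})" unfolding B_def by (rule card_UN_le) simp
    also have "\<dots> \<le> (\<Sum>k\<in>{1..<m}. q ^ k)"
    proof (rule sum_mono)
      fix k assume "k \<in> {1..<m}"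
      then have "q ^ 1 \<le> q ^ k" by (intro power_increasing) (use q2 in auto)
      then have "q ^ k \<ge> 2" using q2 by simp
      then show "card {x::'a. x ^ (q ^ k) = x} \<le> q ^ k" by (rule card_roots_le)
    qed
    also have "\<dots> \<le> (\<Sum>k<m. q ^ k)" by (rule sum_mono2) auto
    also have "\<dots> < q ^ m" by (rule geom_lt[OF q2])
    finally have "card B < card (UNIV :: 'a set)" using assms(3) by simp
    then have "B \<noteq> UNIV" by auto
    then obtain a :: 'a where a: "a \<notin> B" by blast
    then have aB: "a ^ (q ^ k) \<noteq> a" if "1 \<le> k" "k < m" for k using that unfolding B_def by auto
    define x0 where "x0 = replicate m a"
    have "hamming_dist x0 c \<ge> m - 1" if "c \<in> C" for c
    proof -
      obtain b where b: "c = map (\<lambda>i. b ^ (q ^ i)) [0..<l]" using \<open>c \<in> C\<close> unfolding C by blast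
      let ?A = "{i. i < m \<and> a = b ^ (q ^ i)}"
      have "\<forall>i\<in>?A. \<forall>j\<in>?A. i = j"
      proof (intro ballI, rule ccontr)
        fix i j assume i: "i \<in> ?A" and j: "j \<in> ?A" and ij: "i \<noteq> j"
        have key: "False" if "i' \<in> ?A" "j' \<in> ?A" "i' < j'" for i' j'
        proof -
          have e1: "a ^ (q ^ (j' - i')) = (b ^ (q ^ i')) ^ (q ^ (j' - i'))" using that by simp
          have e2: "(b ^ (q ^ i')) ^ (q ^ (j' - i')) = b ^ (q ^ i' * q ^ (j' - i'))" by (rule power_mult[symmetric])
          have e3: "q ^ i' * q ^ (j' - i') = q ^ j'" using \<open>i' < j'\<close> by (simp flip: power_add)
          have e4: "b ^ (q ^ j') = a" using that by simp
          have "a ^ (q ^ (j' - i')) = a" by (simp only: e1 e2 e3 e4)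
          moreover have "1 \<le> j' - i'" "j' - i' < m" using that by auto
          ultimately show False using aB by blast
        qed
        show False using ij key[OF i j] key[OF j i] by linarith
      qed
      then have "card ?A \<le> 1" using card_le_Suc0_iff_eq[of ?A] by simp
      moreover have "card ?A + card {i. i < m \<and> a \<noteq> b ^ (q ^ i)} = m" by (rule card_split)
      ultimately have "card {i. i < m \<and> a \<noteq> b ^ (q ^ i)} \<ge> m - 1" by linarith
      moreover have "hamming_dist x0 c = card {i. i < m \<and> a \<noteq> b ^ (q ^ i)}"
        unfolding b x0_def using lm' by (subst hd_map) (auto intro!: arg_cong[where f=card])
      ultimately show ?thesis by simp
    qed
    then have "D x0 \<ge> m - 1" by (rule Dge)
    moreover have "x0 \<in> {x. length x = l}" unfolding x0_def lm' by simp
    ultimately have "Max (D ` {x. length x = l}) \<ge> m - 1"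
      using finD by (meson Max_ge image_eqI le_trans)
    moreover have "Max (D ` {x. length x = l}) \<le> m - 1" using finD neD up lm' by auto
    ultimately show ?thesis unfolding cr[unfolded C_def] using False lm' by simp
  qed
qed

end
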